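(* Let $(P,Q)$ be a global solution of the Cucker–Smale model with velocity control described in the context, with initial data $(P^0,Q^0)$. Then: (1) $\sum_{k=1}^N p_k(t)$ is conserved: $\frac{d}{dt}\sum_{k=1}^N p_k(t)=0$. (2) $\max_{i\in[N]}|p_i(t)|\le\max_{i\in[N]}|p_i(s)|$ for $0\le s\le t$; in particular $\sup_{t\ge0}\max_{i}|p_i(t)|=\max_i|p_i^0|=P^0_M$. (3) For all $t\in\mathbb R_+$ and $i,j\in[N]$, $m_{G'}|p_i(t)-p_j(t)|\le|G(p_i(t))-G(p_j(t))|\le M_{G'}|p_i(t)-p_j(t)|$. (4) There exists a positive constant $\mathcal M=\mathcal M(P^0)>0$ such that $\mathcal M|p_i(t)-p_j(t)|^2\le(p_i(t)-p_j(t))\cdot(G(p_i(t))-G(p_j(t)))$ for all $t\in\mathbb R_+$ and $i,j\in[N]$.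
   Context: Let $N\ge1$, $d\ge1$, $\kappa>0$, $[N]=\{1,\dots,N\}$, $\mathbb R_+=(0,\infty)$. The velocity control function $G:\mathbb R^d\to\mathbb R^d$ is $G(p)=g(|p|)\,p/|p|$ for $p\ne0$, $G(0)=0$, with $g\in C^1([0,\infty))$, $g(0)=0$, $0<m\le g'\le M$ on every compact interval (constants depending on the interval), and $g$ convex or concave on $(0,\infty)$. The kernel $\psi:\mathbb R_+\to\mathbb R_+$ is bounded, Lipschitz continuous and nonincreasing. The model is, for $i\in[N]$, $t>0$: \[ \dot q_i=G(p_i),\qquad \dot p_i=\frac{\kappa}{N}\sum_{k=1}^N\psi(|q_k-q_i|)\big(G(p_k)-G(p_i)\big),\qquad (q_i,p_i)(0)=(q_i^0,p_i^0)\in\mathbb R^d\times\mathbb R^d. \] Notation: $P^0_M=\max_i|p_i^0|$, $M_{G'}=\max\{g'(|p|):|p|\le P^0_M\}$, $m_{G'}=\min\{g'(|p|):|p|\le P^0_M\}$. *)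

theory Defs
  imports "HOL-Analysis.Analysis"
begin

definition velG :: "(real \<Rightarrow> real) \<Rightarrow> 'a::real_normed_vector \<Rightarrow> 'a" where
  "velG g p = (if p = 0 then 0 else (g (norm p) / norm p) *\<^sub>R p)"

end

theory Submission
  imports Defs "HOL-Analysis.Analysis"
begin


lemma cont_induct_eps:
  fixes f f' :: "'i \<Rightarrow> real \<Rightarrow> real" and s t C e :: real
  assumes fin: "finite I" and st: "s \<le> t" and e: "e > 0"
    and cont: "\<forall>j\<in>I. continuous_on {s..t} (f j)"
    and der: "\<forall>j\<in>I. \<forall>x\<in>{s<..<t}. (f j has_real_derivative f' j x) (at x)"
    and act: "\<forall>j\<in>I. \<forall>x\<in>{s<..<t}. (\<forall>k\<in>I. f k x \<le> f j x) \<longrightarrow> f' j x \<le> 0"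
    and init: "\<forall>j\<in>I. f j s \<le> C"
  shows "\<forall>j\<in>I. f j t \<le> C + e * (t - s) + e"
proof -
  define b where "b x = C + e * (x - s) + e" for x
  define A where "A = {x\<in>{s..t}. \<forall>j\<in>I. f j x \<le> b x}"
  have Aeq: "A = {s..t} \<inter> (\<Inter>j\<in>I. {x\<in>{s..t}. f j x \<le> b x})"
    unfolding A_def by auto
  have bcont: "continuous_on {s..t} b" unfolding b_def by (intro continuous_intros)
  have "closed A" unfolding Aeq
    by (intro closed_Int closed_INT ballI continuous_on_closed_Collect_le)
       (use cont bcont in auto)
  have sA: "s \<in> A" unfolding A_def b_def using st init e by auto
  have bdd: "bdd_above A" unfolding A_def by (auto intro: bdd_aboveI[where M=t])
  define \<tau> where "\<tau> = Sup A"
  have tA: "\<tau> \<in> A" unfolding \<tau>_def using closed_contains_Sup[OF _ bdd \<open>closed A\<close>] sA by auto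
  have "\<tau> = t"
  proof (rule ccontr)
    assume "\<tau> \<noteq> t"
    with tA have tlt: "\<tau> < t" and st0: "s \<le> \<tau>" unfolding A_def by auto
    have ev: "\<forall>j\<in>I. eventually (\<lambda>x. f j x \<le> b x) (at_right \<tau>)"
    proof
      fix j assume j: "j \<in> I"
      have fjt: "f j \<tau> \<le> b \<tau>" using tA j unfolding A_def by auto
      show "eventually (\<lambda>x. f j x \<le> b x) (at_right \<tau>)"
      proof (cases "f j \<tau> < b \<tau>")
        case True
        have "(f j \<longlongrightarrow> f j \<tau>) (at \<tau> within {s..t})"
          using cont j tA unfolding A_def continuous_on_def by auto
        then have "(f j \<longlongrightarrow> f j \<tau>) (at \<tau> within {\<tau>..t})"
          by (rule tendsto_within_subset) (use st0 in auto)
        then have "(f j \<longlongrightarrow> f j \<tau>) (at_right \<tau>)"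
          using at_within_Icc_at_right[OF tlt] by simp
        then have "eventually (\<lambda>x. f j x < b \<tau>) (at_right \<tau>)"
          using True order_tendstoD(2) by blast
        moreover have "eventually (\<lambda>x. \<tau> < x) (at_right \<tau>)"
          by (simp add: eventually_at_right_less)
        ultimately show ?thesis
        proof eventually_elim
          case (elim x)
          have "e * (\<tau> - s) \<le> e * (x - s)" using elim e by (simp add: mult_left_mono)
          then show ?case using elim unfolding b_def by linarith
        qed
      next
        case False
        then have eq: "f j \<tau> = b \<tau>" using fjt by auto
        have "\<tau> \<noteq> s" using eq init j e unfolding b_def by auto
        then have tin: "\<tau> \<in> {s<..<t}" using st0 tlt by auto
        have "\<forall>k\<in>I. f k \<tau> \<le> f j \<tau>" using tA eq unfolding A_def by auto
        then have "f' j \<tau> \<le> 0" using act j tin by auto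
        have "(f j has_real_derivative f' j \<tau>) (at \<tau> within {\<tau><..})"
          using der j tin by (auto intro: has_field_derivative_at_within)
        then have "((\<lambda>y. (f j y - f j \<tau>) / (y - \<tau>)) \<longlongrightarrow> f' j \<tau>) (at_right \<tau>)"
          using has_field_derivative_iff by blast
        then have "eventually (\<lambda>y. (f j y - f j \<tau>) / (y - \<tau>) < e) (at_right \<tau>)"
          using order_tendstoD(2) \<open>f' j \<tau> \<le> 0\<close> e by fastforce
        moreover have "eventually (\<lambda>x. \<tau> < x) (at_right \<tau>)"
          by (simp add: eventually_at_right_less)
        ultimately show ?thesis
        proof eventually_elim
          case (elim x)
          then have "f j x - f j \<tau> < e * (x - \<tau>)" by (simp add: pos_divide_less_eq)
          then show ?case using eq unfolding b_def by (simp add: algebra_simps)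
        qed
      qed
    qed
    then have "eventually (\<lambda>x. \<forall>j\<in>I. f j x \<le> b x) (at_right \<tau>)"
      by (rule eventually_ball_finite[OF fin])
    moreover have "eventually (\<lambda>x. \<tau> < x) (at_right \<tau>)"
      by (simp add: eventually_at_right_less)
    moreover have "eventually (\<lambda>x. x < t) (at_right \<tau>)"
      unfolding eventually_at_right_field using tlt by blast
    ultimately have "eventually (\<lambda>x. (\<forall>j\<in>I. f j x \<le> b x) \<and> \<tau> < x \<and> x < t) (at_right \<tau>)"
      by eventually_elim auto
    then have "\<exists>x. (\<forall>j\<in>I. f j x \<le> b x) \<and> \<tau> < x \<and> x < t"
      by (rule eventually_happens'[OF trivial_limit_at_right_real])
    then obtain x where x: "\<forall>j\<in>I. f j x \<le> b x" "\<tau> < x" "x < t"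
      by blast
    have "x \<in> A" unfolding A_def using x st0 by auto
    then have "x \<le> \<tau>" unfolding \<tau>_def using bdd by (rule cSup_upper)
    then show False using x by auto
  qed
  then show ?thesis using tA unfolding A_def b_def by auto
qed

lemma cont_induct_max:
  fixes f f' :: "'i \<Rightarrow> real \<Rightarrow> real" and s t C :: real
  assumes fin: "finite I" and st: "s \<le> t"
    and cont: "\<forall>j\<in>I. continuous_on {s..t} (f j)"
    and der: "\<forall>j\<in>I. \<forall>x\<in>{s<..<t}. (f j has_real_derivative f' j x) (at x)"
    and act: "\<forall>j\<in>I. \<forall>x\<in>{s<..<t}. (\<forall>k\<in>I. f k x \<le> f j x) \<longrightarrow> f' j x \<le> 0"
    and init: "\<forall>j\<in>I. f j s \<le> C"
  shows "\<forall>j\<in>I. f j t \<le> C"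
proof (rule ccontr)
  assume "\<not> ?thesis"
  then obtain j where j: "j \<in> I" "f j t > C" by force
  define e where "e = (f j t - C) / (2 * (t - s + 1))"
  have e: "e > 0" unfolding e_def using j st by auto
  have h1: "f j t \<le> C + e * (t - s) + e"
    using cont_induct_eps[OF fin st e cont der act init] j by auto
  have h2: "e * (t - s) + e = e * (t - s + 1)" by (simp add: algebra_simps)
  have h3: "e * (t - s + 1) = (f j t - C) / 2" unfolding e_def using st by (simp add: field_simps)
  have h4: "f j t \<le> C + (f j t - C) / 2" using h1 unfolding add.assoc h2 h3 .
  show False using h4 j(2) by (simp add: field_simps)
qed


lemma lin_nonneg:
  fixes A B w k :: real
  assumes "\<bar>w\<bar> \<le> k" "A - k * B \<ge> 0" "A + k * B \<ge> 0"
  shows "A - w * B \<ge> 0"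
proof (cases "B \<ge> 0")
  case True
  have "w * B \<le> k * B" using assms(1) True by (intro mult_right_mono) auto
  then show ?thesis using assms by linarith
next
  case False
  have "w * B \<le> (-k) * B" using assms(1) False by (intro mult_right_mono_neg) auto
  then show ?thesis using assms by linarith
qed

lemma G_ineqs:
  fixes x y :: "'a::real_inner" and g :: "real \<Rightarrow> real" and m M :: real
  assumes g0: "g 0 = 0"
    and ax: "m * norm x \<le> g (norm x)" and bx: "g (norm x) \<le> M * norm x"
    and ay: "m * norm y \<le> g (norm y)" and by': "g (norm y) \<le> M * norm y"
    and dm: "m * (norm x - norm y)^2 \<le> (norm x - norm y) * (g (norm x) - g (norm y))"
    and dM: "\<bar>g (norm x) - g (norm y)\<bar> \<le> M * \<bar>norm x - norm y\<bar>"
    and M0: "M \<ge> 0" and m0: "m \<ge> 0"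
  shows "m * (norm (x - y))^2 \<le> (x - y) \<bullet> (velG g x - velG g y)"
    and "norm (velG g x - velG g y) \<le> M * norm (x - y)"
proof -
  define a where "a = norm x"
  define b where "b = norm y"
  define ga where "ga = g a"
  define gb where "gb = g b"
  define \<alpha> where "\<alpha> = ga / a"
  define \<beta> where "\<beta> = gb / b"
  define w where "w = x \<bullet> y"
  have a0: "a \<ge> 0" "b \<ge> 0" unfolding a_def b_def by auto
  have Gx: "velG g x = \<alpha> *\<^sub>R x" unfolding velG_def \<alpha>_def ga_def a_def by auto
  have Gy: "velG g y = \<beta> *\<^sub>R y" unfolding velG_def \<beta>_def gb_def b_def by auto
  have aa: "\<alpha> * a = ga" unfolding \<alpha>_def ga_def using g0 by (cases "a = 0") auto
  have bb: "\<beta> * b = gb" unfolding \<beta>_def gb_def using g0 by (cases "b = 0") auto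
  have xx: "x \<bullet> x = a^2" unfolding a_def by (simp add: power2_norm_eq_inner)
  have yy: "y \<bullet> y = b^2" unfolding b_def by (simp add: power2_norm_eq_inner)
  have wab: "\<bar>w\<bar> \<le> a * b" unfolding w_def a_def b_def by (rule Cauchy_Schwarz_ineq2)
  have nxy: "(norm (x - y))^2 = a^2 + b^2 - 2 * w"
    unfolding power2_norm_eq_inner w_def using xx yy
    by (simp add: inner_diff_left inner_diff_right inner_commute)
  have ip: "(x - y) \<bullet> (velG g x - velG g y) = a * ga + b * gb - w * (\<alpha> + \<beta>)"
  proof -
    have "(x - y) \<bullet> (velG g x - velG g y) = \<alpha> * (x \<bullet> x) + \<beta> * (y \<bullet> y) - w * (\<alpha> + \<beta>)"
      unfolding Gx Gy w_def by (simp add: inner_diff_left inner_diff_right inner_commute algebra_simps)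
    also have "\<dots> = a * ga + b * gb - w * (\<alpha> + \<beta>)"
      using xx yy by (simp add: power2_eq_square algebra_simps flip: aa bb)
    finally show ?thesis .
  qed
  have abal: "a * b * \<alpha> = b * ga" using aa by (simp add: algebra_simps)
  have abbe: "a * b * \<beta> = a * gb" using bb by (simp add: algebra_simps)
  have ab2: "a * b * (\<alpha> * \<beta>) = ga * gb" using aa bb by (simp add: algebra_simps)
  have dm': "m * (a - b)^2 \<le> (a - b) * (ga - gb)" using dm unfolding a_def b_def ga_def gb_def .
  have "0 \<le> (a * ga + b * gb - m * (a^2 + b^2)) - w * (\<alpha> + \<beta> - 2 * m)"
  proof (rule lin_nonneg[OF wab])
    have "(a * ga + b * gb - m * (a^2 + b^2)) - a * b * (\<alpha> + \<beta> - 2 * m)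
        = (a - b) * (ga - gb) - m * (a - b)^2"
      by (simp add: algebra_simps power2_eq_square flip: aa bb)
    then show "0 \<le> (a * ga + b * gb - m * (a^2 + b^2)) - a * b * (\<alpha> + \<beta> - 2 * m)"
      using dm' by linarith
    have "(a * ga + b * gb - m * (a^2 + b^2)) + a * b * (\<alpha> + \<beta> - 2 * m)
        = (a + b) * ((ga - m * a) + (gb - m * b))"
      by (simp add: algebra_simps power2_eq_square flip: aa bb)
    moreover have "0 \<le> (a + b) * ((ga - m * a) + (gb - m * b))"
      using a0 ax ay unfolding a_def b_def ga_def gb_def by (intro mult_nonneg_nonneg) auto
    ultimately show "0 \<le> (a * ga + b * gb - m * (a^2 + b^2)) + a * b * (\<alpha> + \<beta> - 2 * m)"
      by linarith
  qed
  then show "m * (norm (x - y))^2 \<le> (x - y) \<bullet> (velG g x - velG g y)"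
    unfolding ip nxy by (simp add: algebra_simps)
  have nG: "(norm (velG g x - velG g y))^2 = ga^2 + gb^2 - 2 * (\<alpha> * \<beta>) * w"
  proof -
    have "(norm (velG g x - velG g y))^2 = \<alpha>^2 * (x \<bullet> x) + \<beta>^2 * (y \<bullet> y) - 2 * (\<alpha> * \<beta>) * w"
      unfolding Gx Gy power2_norm_eq_inner w_def
      by (simp add: inner_diff_left inner_diff_right inner_commute algebra_simps power2_eq_square)
    also have "\<dots> = ga^2 + gb^2 - 2 * (\<alpha> * \<beta>) * w"
      using xx yy by (simp add: power2_eq_square algebra_simps flip: aa bb)
    finally show ?thesis .
  qed
  have dM': "\<bar>ga - gb\<bar> \<le> M * \<bar>a - b\<bar>" using dM unfolding a_def b_def ga_def gb_def .
  have sq1: "(ga - gb)^2 \<le> (M * (a - b))^2"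
  proof -
    have "\<bar>ga - gb\<bar>^2 \<le> (M * \<bar>a - b\<bar>)^2" using dM' by (intro power_mono) auto
    then show ?thesis by (simp add: power_mult_distrib)
  qed
  have sq2: "(ga + gb)^2 \<le> (M * (a + b))^2"
  proof -
    have "0 \<le> m * a" "0 \<le> m * b" using m0 a0 by auto
    then have "0 \<le> ga + gb" using ax ay unfolding a_def b_def ga_def gb_def
      by linarith
    moreover have "ga + gb \<le> M * (a + b)" using bx by' unfolding a_def b_def ga_def gb_def
      by (simp add: algebra_simps)
    ultimately show ?thesis by (intro power_mono) auto
  qed
  have "0 \<le> (M^2 * (a^2 + b^2) - ga^2 - gb^2) - w * (2 * M^2 - 2 * (\<alpha> * \<beta>))"
  proof (rule lin_nonneg[OF wab])
    have "(M^2 * (a^2 + b^2) - ga^2 - gb^2) - a * b * (2 * M^2 - 2 * (\<alpha> * \<beta>))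
       = (M * (a - b))^2 - (ga - gb)^2"
      by (simp add: algebra_simps power2_eq_square flip: aa bb)
    then show "0 \<le> (M^2 * (a^2 + b^2) - ga^2 - gb^2) - a * b * (2 * M^2 - 2 * (\<alpha> * \<beta>))"
      using sq1 by linarith
    have "(M^2 * (a^2 + b^2) - ga^2 - gb^2) + a * b * (2 * M^2 - 2 * (\<alpha> * \<beta>))
       = (M * (a + b))^2 - (ga + gb)^2"
      by (simp add: algebra_simps power2_eq_square flip: aa bb)
    then show "0 \<le> (M^2 * (a^2 + b^2) - ga^2 - gb^2) + a * b * (2 * M^2 - 2 * (\<alpha> * \<beta>))"
      using sq2 by linarith
  qed
  moreover have e1: "(M * norm (x - y))^2 = M^2 * (a^2 + b^2) - w * (2 * M^2)"
    unfolding power_mult_distrib nxy by (simp add: algebra_simps)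
  moreover have "w * (2 * M^2 - 2 * (\<alpha> * \<beta>)) = w * (2 * M^2) - 2 * (\<alpha> * \<beta>) * w"
    by (simp add: algebra_simps)
  ultimately have "(norm (velG g x - velG g y))^2 \<le> (M * norm (x - y))^2"
    unfolding nG by linarith
  then show "norm (velG g x - velG g y) \<le> M * norm (x - y)"
    by (rule power2_le_imp_le[OF _ mult_nonneg_nonneg[OF M0 norm_ge_zero]])
qed



lemma g_pair:
  fixes g :: "real \<Rightarrow> real"
  assumes H: "\<forall>a b. 0 \<le> a \<longrightarrow> a \<le> b \<longrightarrow> b \<le> R \<longrightarrow> m * (b - a) \<le> g b - g a \<and> g b - g a \<le> M * (b - a)"
    and m0: "m \<ge> 0" and g0: "g 0 = 0"
    and a: "0 \<le> a" "a \<le> R" and b: "0 \<le> b" "b \<le> R"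
  shows "m * a \<le> g a" "g a \<le> M * a"
    and "m * (a - b)^2 \<le> (a - b) * (g a - g b)"
    and "\<bar>g a - g b\<bar> \<le> M * \<bar>a - b\<bar>"
proof -
  show "m * a \<le> g a" "g a \<le> M * a" using H[rule_format, of 0 a] a g0 by auto
  have gen: "m * (v - u)^2 \<le> (v - u) * (g v - g u) \<and> \<bar>g v - g u\<bar> \<le> M * \<bar>v - u\<bar>"
    if "0 \<le> u" "u \<le> v" "v \<le> R" for u v
  proof -
    have h: "m * (v - u) \<le> g v - g u" "g v - g u \<le> M * (v - u)" using H that by auto
    have "m * (v - u) * (v - u) \<le> (g v - g u) * (v - u)"
      using h(1) that by (intro mult_right_mono) auto
    moreover have "0 \<le> m * (v - u)" using m0 that by auto
    ultimately show ?thesis using h that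
      by (auto simp: power2_eq_square algebra_simps)
  qed
  show "m * (a - b)^2 \<le> (a - b) * (g a - g b)" "\<bar>g a - g b\<bar> \<le> M * \<bar>a - b\<bar>"
  proof -
    have "m * (a - b)^2 \<le> (a - b) * (g a - g b) \<and> \<bar>g a - g b\<bar> \<le> M * \<bar>a - b\<bar>"
    proof (cases "b \<le> a")
      case True then show ?thesis using gen[of b a] a b by auto
    next
      case False
      then have "m * (b - a)^2 \<le> (b - a) * (g b - g a) \<and> \<bar>g b - g a\<bar> \<le> M * \<bar>b - a\<bar>"
        using gen[of a b] a b by auto
      then show ?thesis by (simp add: power2_commute abs_minus_commute algebra_simps)
    qed
    then show "m * (a - b)^2 \<le> (a - b) * (g a - g b)" "\<bar>g a - g b\<bar> \<le> M * \<bar>a - b\<bar>" by auto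
  qed
qed


theorem proposition2p1:
  fixes N :: nat and \<kappa> :: real
    and g g' :: "real \<Rightarrow> real" and \<psi> :: "real \<Rightarrow> real"
    and q p :: "nat \<Rightarrow> real \<Rightarrow> 'a::euclidean_space"
  assumes N: "N \<ge> 1" and kappa: "\<kappa> > 0"
    and g_deriv: "\<forall>r\<ge>0. (g has_real_derivative g' r) (at r within {0..})"
    and g'_cont: "continuous_on {0..} g'"
    and g0: "g 0 = 0"
    and g'_bounds: "\<forall>a b. 0 \<le> a \<longrightarrow> a \<le> b \<longrightarrow>
                      (\<exists>m M. 0 < m \<and> (\<forall>r\<in>{a..b}. m \<le> g' r \<and> g' r \<le> M))"
    and g_cvx: "convex_on {0<..} g \<or> concave_on {0<..} g"
    and psi_pos: "\<forall>r\<ge>0. \<psi> r > 0"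
    and psi_bdd: "bounded (\<psi> ` {0..})"
    and psi_lip: "\<exists>L. L-lipschitz_on {0..} \<psi>"
    and psi_noninc: "\<forall>x y. 0 \<le> x \<longrightarrow> x \<le> y \<longrightarrow> \<psi> y \<le> \<psi> x"
    and q_cont: "\<forall>i\<in>{1..N}. continuous_on {0..} (q i)"
    and p_cont: "\<forall>i\<in>{1..N}. continuous_on {0..} (p i)"
    and q_ode: "\<forall>i\<in>{1..N}. \<forall>t>0. (q i has_vector_derivative velG g (p i t)) (at t)"
    and p_ode: "\<forall>i\<in>{1..N}. \<forall>t>0. (p i has_vector_derivative
                  (\<kappa> / real N) *\<^sub>R (\<Sum>k\<in>{1..N}. \<psi> (norm (q k t - q i t)) *\<^sub>R
                      (velG g (p k t) - velG g (p i t)))) (at t)"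
  defines "P0M \<equiv> Max ((\<lambda>i. norm (p i 0)) ` {1..N})"
    and "MG' \<equiv> Sup {g' (norm v) | v :: 'a. norm v \<le> Max ((\<lambda>i. norm (p i 0)) ` {1..N})}"
    and "mG' \<equiv> Inf {g' (norm v) | v :: 'a. norm v \<le> Max ((\<lambda>i. norm (p i 0)) ` {1..N})}"
  shows "(\<forall>t>0. ((\<lambda>s. \<Sum>k\<in>{1..N}. p k s) has_vector_derivative 0) (at t))
    \<and> (\<forall>s t. 0 \<le> s \<longrightarrow> s \<le> t \<longrightarrow>
          Max ((\<lambda>i. norm (p i t)) ` {1..N}) \<le> Max ((\<lambda>i. norm (p i s)) ` {1..N}))
    \<and> (SUP t\<in>{0..}. Max ((\<lambda>i. norm (p i t)) ` {1..N})) = P0M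
    \<and> (\<forall>t>0. \<forall>i\<in>{1..N}. \<forall>j\<in>{1..N}.
          mG' * norm (p i t - p j t) \<le> norm (velG g (p i t) - velG g (p j t))
        \<and> norm (velG g (p i t) - velG g (p j t)) \<le> MG' * norm (p i t - p j t))
    \<and> (\<exists>\<M>>0. \<forall>t>0. \<forall>i\<in>{1..N}. \<forall>j\<in>{1..N}.
          \<M> * (norm (p i t - p j t))\<^sup>2 \<le> (p i t - p j t) \<bullet> (velG g (p i t) - velG g (p j t)))"
proof -
  define I where "I = {1..N}"
  have fin: "finite I" and ne: "I \<noteq> {}" unfolding I_def using N by auto
  define Mx where "Mx t = Max ((\<lambda>i. norm (p i t)) ` I)" for t
  have Mx_ge: "norm (p i t) \<le> Mx t" if "i \<in> I" for i t
    unfolding Mx_def using fin that by auto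
  have Mx_nn: "0 \<le> Mx t" for t using Mx_ge[of "SOME i. i \<in> I" t] ne some_in_eq[of I]
    by (meson norm_ge_zero order_trans)
  have gmvt: "m * (b - a) \<le> g b - g a \<and> g b - g a \<le> M * (b - a)"
    if ab: "0 \<le> a" "a \<le> b" and bnd: "\<forall>r\<in>{a..b}. m \<le> g' r \<and> g' r \<le> M" for a b m M
  proof -
    have "\<exists>x\<in>{a..b}. g b - g a = (\<lambda>h. g' x * h) (b - a)"
    proof (rule mvt_very_simple[OF ab(2)])
      fix x assume "a \<le> x" "x \<le> b"
      then have "(g has_derivative (*) (g' x)) (at x within {0..})"
        using g_deriv ab unfolding has_field_derivative_def by auto
      then show "(g has_derivative (*) (g' x)) (at x within {a..b})"
        by (rule has_derivative_subset) (use ab in auto)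
    qed
    then obtain x where x: "x \<in> {a..b}" "g b - g a = g' x * (b - a)" by auto
    have "m * (b - a) \<le> g' x * (b - a)" "g' x * (b - a) \<le> M * (b - a)"
      using bnd x ab by (auto intro: mult_right_mono)
    then show ?thesis using x by auto
  qed
  have gmono: "g a \<le> g b" if ab: "0 \<le> a" "a \<le> b" for a b
  proof -
    obtain m M where mM: "0 < m" "\<forall>r\<in>{a..b}. m \<le> g' r \<and> g' r \<le> M"
      using g'_bounds[rule_format, OF ab] by blast
    have "m * (b - a) \<le> g b - g a" using gmvt[OF ab mM(2)] by (rule conjunct1)
    moreover have "0 \<le> m * (b - a)" using \<open>0 < m\<close> ab by auto
    ultimately show ?thesis by auto
  qed
  have gnn: "0 \<le> g a" if "0 \<le> a" for a using gmono[OF order_refl that] g0 by simp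
  have normG: "norm (velG g v) = g (norm v)" for v :: 'a
    using gnn[of "norm v"] g0 by (auto simp: velG_def)
  have innG: "v \<bullet> velG g v = norm v * g (norm v)" for v :: 'a
    by (auto simp: velG_def power2_norm_eq_inner[symmetric] power2_eq_square)
  have key: "x \<bullet> velG g y \<le> x \<bullet> velG g x" if "norm y \<le> norm x" for x y :: 'a
  proof -
    have "x \<bullet> velG g y \<le> norm x * norm (velG g y)" by (rule norm_cauchy_schwarz)
    also have "\<dots> = norm x * g (norm y)" by (simp add: normG)
    also have "\<dots> \<le> norm x * g (norm x)" using gmono[OF _ that] by (intro mult_left_mono) auto
    finally show ?thesis by (simp add: innG)
  qed
  define D where "D i t = (\<kappa> / real N) *\<^sub>R (\<Sum>k\<in>I. \<psi> (norm (q k t - q i t)) *\<^sub>R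
                      (velG g (p k t) - velG g (p i t)))" for i t
  have pder: "(p i has_vector_derivative D i t) (at t)" if "i \<in> I" "t > 0" for i t
    using p_ode that unfolding D_def I_def by auto
  have part1: "((\<lambda>s. \<Sum>k\<in>{1..N}. p k s) has_vector_derivative 0) (at t)" if t: "t > 0" for t
  proof -
    have "((\<lambda>s. \<Sum>k\<in>I. p k s) has_vector_derivative (\<Sum>i\<in>I. D i t)) (at t)"
      by (rule has_vector_derivative_sum) (use pder t in auto)
    moreover have "(\<Sum>i\<in>I. D i t) = 0"
    proof -
      define h where "h i k = \<psi> (norm (q k t - q i t))" for i k
      define G where "G k = velG g (p k t)" for k
      have hs: "h i k = h k i" for i k unfolding h_def by (simp add: norm_minus_commute)
      have "(\<Sum>i\<in>I. \<Sum>k\<in>I. h i k *\<^sub>R (G k - G i))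
          = (\<Sum>i\<in>I. \<Sum>k\<in>I. h i k *\<^sub>R G k) - (\<Sum>i\<in>I. \<Sum>k\<in>I. h i k *\<^sub>R G i)"
        by (simp add: scaleR_diff_right sum_subtractf)
      also have "(\<Sum>i\<in>I. \<Sum>k\<in>I. h i k *\<^sub>R G k) = (\<Sum>k\<in>I. \<Sum>i\<in>I. h i k *\<^sub>R G k)"
        by (rule sum.swap)
      also have "\<dots> = (\<Sum>k\<in>I. \<Sum>i\<in>I. h k i *\<^sub>R G k)" by (simp add: hs)
      finally have "(\<Sum>i\<in>I. \<Sum>k\<in>I. h i k *\<^sub>R (G k - G i)) = 0" by simp
      then show ?thesis unfolding D_def h_def G_def by (simp add: scaleR_sum_right[symmetric])
    qed
    ultimately show ?thesis unfolding I_def by simp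
  qed
  have part2: "Mx t \<le> Mx s" if st: "0 \<le> s" "s \<le> t" for s t
  proof -
    have "\<forall>j\<in>I. (\<lambda>\<tau>. (norm (p j \<tau>))^2) t \<le> (Mx s)^2"
    proof (rule cont_induct_max[OF fin st(2), where f' = "\<lambda>j x. 2 * (p j x \<bullet> D j x)"])
      show "\<forall>j\<in>I. continuous_on {s..t} (\<lambda>\<tau>. (norm (p j \<tau>))^2)"
      proof
        fix j assume "j \<in> I"
        then have "continuous_on {0..} (p j)" using p_cont unfolding I_def by blast
        then have "continuous_on {s..t} (p j)"
          by (rule continuous_on_subset) (use st in auto)
        then show "continuous_on {s..t} (\<lambda>\<tau>. (norm (p j \<tau>))^2)"
          by (intro continuous_intros)
      qed
      show "\<forall>j\<in>I. \<forall>x\<in>{s<..<t}. ((\<lambda>\<tau>. (norm (p j \<tau>))^2) has_real_derivative 2 * (p j x \<bullet> D j x)) (at x)"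
      proof (intro ballI)
        fix j x assume j: "j \<in> I" and x: "x \<in> {s<..<t}"
        then have "x > 0" using st by auto
        then have pd: "(p j has_derivative (\<lambda>h. h *\<^sub>R D j x)) (at x)"
          using pder[OF j] has_vector_derivative_def by blast
        have "((\<lambda>\<tau>. p j \<tau> \<bullet> p j \<tau>) has_derivative
               (\<lambda>h. p j x \<bullet> (h *\<^sub>R D j x) + (h *\<^sub>R D j x) \<bullet> p j x)) (at x)"
          by (rule has_derivative_inner[OF pd pd])
        then have "((\<lambda>\<tau>. p j \<tau> \<bullet> p j \<tau>) has_derivative (*) (2 * (p j x \<bullet> D j x))) (at x)"
          by (rule has_derivative_eq_rhs) (auto simp: fun_eq_iff inner_commute algebra_simps)
        then show "((\<lambda>\<tau>. (norm (p j \<tau>))^2) has_real_derivative 2 * (p j x \<bullet> D j x)) (at x)"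
          unfolding has_field_derivative_def power2_norm_eq_inner .
      qed
      show "\<forall>j\<in>I. \<forall>x\<in>{s<..<t}. (\<forall>k\<in>I. (norm (p k x))^2 \<le> (norm (p j x))^2) \<longrightarrow> 2 * (p j x \<bullet> D j x) \<le> 0"
      proof (intro ballI impI)
        fix j x assume j: "j \<in> I" and x: "x \<in> {s<..<t}"
          and mx: "\<forall>k\<in>I. (norm (p k x))^2 \<le> (norm (p j x))^2"
        have "p j x \<bullet> D j x = (\<kappa> / real N) * (\<Sum>k\<in>I. \<psi> (norm (q k x - q j x)) *
                 (p j x \<bullet> velG g (p k x) - p j x \<bullet> velG g (p j x)))"
          unfolding D_def by (simp add: inner_sum_right inner_diff_right)
        also have "\<dots> \<le> 0"
        proof (rule mult_nonneg_nonpos)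
          show "0 \<le> \<kappa> / real N" using kappa by auto
          show "(\<Sum>k\<in>I. \<psi> (norm (q k x - q j x)) *
                 (p j x \<bullet> velG g (p k x) - p j x \<bullet> velG g (p j x))) \<le> 0"
          proof (rule sum_nonpos)
            fix k assume k: "k \<in> I"
            have "(norm (p k x))^2 \<le> (norm (p j x))^2" using mx k by blast
            then have "norm (p k x) \<le> norm (p j x)"
              by (rule power2_le_imp_le[OF _ norm_ge_zero])
            then have "p j x \<bullet> velG g (p k x) \<le> p j x \<bullet> velG g (p j x)"
              by (rule key)
            then have "p j x \<bullet> velG g (p k x) - p j x \<bullet> velG g (p j x) \<le> 0"
              by simp
            moreover have "0 \<le> \<psi> (norm (q k x - q j x))" using psi_pos by (simp add: less_imp_le)
            ultimately show "\<psi> (norm (q k x - q j x)) *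
                 (p j x \<bullet> velG g (p k x) - p j x \<bullet> velG g (p j x)) \<le> 0"
              by (rule mult_nonneg_nonpos[rotated])
          qed
        qed
        finally show "2 * (p j x \<bullet> D j x) \<le> 0" by simp
      qed
      show "\<forall>j\<in>I. (\<lambda>\<tau>. (norm (p j \<tau>))^2) s \<le> (Mx s)^2"
        using power_mono[OF Mx_ge norm_ge_zero] by blast
    qed
    then have "\<forall>j\<in>I. norm (p j t) \<le> Mx s"
      using power2_le_imp_le[OF _ Mx_nn] by blast
    then show ?thesis unfolding Mx_def using fin ne by (auto simp: Max_le_iff)
  qed
  have part2': "\<forall>s t. 0 \<le> s \<longrightarrow> s \<le> t \<longrightarrow>
          Max ((\<lambda>i. norm (p i t)) ` {1..N}) \<le> Max ((\<lambda>i. norm (p i s)) ` {1..N})"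
    using part2 unfolding Mx_def I_def by blast
  have P0: "P0M = Mx 0" unfolding P0M_def Mx_def I_def ..
  have part_sup: "(SUP t\<in>{0..}. Max ((\<lambda>i. norm (p i t)) ` {1..N})) = P0M"
  proof -
    have "(SUP t\<in>{0..}. Mx t) = Mx 0"
    proof (rule antisym)
      show "(SUP t\<in>{0..}. Mx t) \<le> Mx 0" by (rule cSUP_least) (auto intro: part2)
      show "Mx 0 \<le> (SUP t\<in>{0..}. Mx t)"
        by (rule cSUP_upper) (auto intro!: bdd_aboveI2[where M="Mx 0"] part2)
    qed
    then show ?thesis unfolding P0 unfolding Mx_def I_def .
  qed
  define R where "R = Mx 0"
  have R0: "0 \<le> R" unfolding R_def by (rule Mx_nn)
  define S where "S = {g' (norm v) | v :: 'a. norm v \<le> R}"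
  have MG'S: "MG' = Sup S" unfolding MG'_def S_def R_def Mx_def I_def ..
  have mG'S: "mG' = Inf S" unfolding mG'_def S_def R_def Mx_def I_def ..
  obtain m0 M0 where m0: "0 < m0" and mM0: "\<forall>r\<in>{0..R}. m0 \<le> g' r \<and> g' r \<le> M0"
    using g'_bounds[rule_format, OF order_refl R0] by blast
  have inS: "g' r \<in> S" if "0 \<le> r" "r \<le> R" for r
  proof -
    define v :: 'a where "v = r *\<^sub>R (SOME i. i \<in> Basis)"
    have "norm v = r" unfolding v_def using that by (simp add: norm_some_Basis)
    then show ?thesis unfolding S_def using that by auto
  qed
  have Ssub: "S \<subseteq> g' ` {0..R}" unfolding S_def by auto
  have bddb: "bdd_below S" using Ssub mM0 by (auto intro!: bdd_belowI[where m=m0])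
  have bdda: "bdd_above S" using Ssub mM0 by (auto intro!: bdd_aboveI[where M=M0])
  have Sne: "S \<noteq> {}" using inS[OF order_refl R0] by auto
  have mG'le: "mG' \<le> g' r" and MG'ge: "g' r \<le> MG'" if "0 \<le> r" "r \<le> R" for r
    using cInf_lower[OF inS[OF that] bddb] cSup_upper[OF inS[OF that] bdda] mG'S MG'S by auto
  have mG'pos: "0 < mG'"
  proof -
    have "m0 \<le> Inf S" using Sne Ssub mM0 by (intro cInf_greatest) auto
    then show ?thesis using m0 mG'S by auto
  qed
  have MG'nn: "0 \<le> MG'" using mG'le[OF order_refl R0] MG'ge[OF order_refl R0] mG'pos by auto
  have H: "\<forall>a b. 0 \<le> a \<longrightarrow> a \<le> b \<longrightarrow> b \<le> R \<longrightarrow> mG' * (b - a) \<le> g b - g a \<and> g b - g a \<le> MG' * (b - a)"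
  proof (intro allI impI)
    fix a b assume ab: "0 \<le> a" "a \<le> b" "b \<le> R"
    have "\<forall>r\<in>{a..b}. mG' \<le> g' r \<and> g' r \<le> MG'"
      using mG'le MG'ge ab by auto
    then show "mG' * (b - a) \<le> g b - g a \<and> g b - g a \<le> MG' * (b - a)"
      using gmvt[OF ab(1,2)] by blast
  qed
  have bnd: "norm (p i t) \<le> R" if "i \<in> I" "t > 0" for i t
    using Mx_ge[OF that(1), of t] part2[of 0 t] that unfolding R_def by auto
  have GB: "mG' * (norm (x - y))^2 \<le> (x - y) \<bullet> (velG g x - velG g y)
          \<and> norm (velG g x - velG g y) \<le> MG' * norm (x - y)"
    if "norm x \<le> R" "norm y \<le> R" for x y :: 'a
  proof -
    note gp = g_pair[OF H less_imp_le[OF mG'pos] g0 norm_ge_zero that(1) norm_ge_zero that(2)]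
    note gq = g_pair[OF H less_imp_le[OF mG'pos] g0 norm_ge_zero that(2) norm_ge_zero that(1)]
    note GI = G_ineqs[OF g0 gp(1) gp(2) gq(1) gq(2) gp(3) gp(4) MG'nn less_imp_le[OF mG'pos]]
    show ?thesis using GI by blast
  qed
  have lowerG: "mG' * norm (x - y) \<le> norm (velG g x - velG g y)"
    if "norm x \<le> R" "norm y \<le> R" for x y :: 'a
  proof (cases "norm (x - y) = 0")
    case True then show ?thesis by simp
  next
    case False
    then have pos: "0 < norm (x - y)" by simp
    have "mG' * norm (x - y) * norm (x - y) = mG' * (norm (x - y))^2" by (simp add: power2_eq_square)
    also have "\<dots> \<le> (x - y) \<bullet> (velG g x - velG g y)" using GB[OF that] by auto
    also have "\<dots> \<le> norm (x - y) * norm (velG g x - velG g y)" by (rule norm_cauchy_schwarz)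
    also have "\<dots> = norm (velG g x - velG g y) * norm (x - y)" by simp
    finally show ?thesis using pos by (rule mult_right_le_imp_le)
  qed
  have part3: "\<forall>t>0. \<forall>i\<in>{1..N}. \<forall>j\<in>{1..N}.
          mG' * norm (p i t - p j t) \<le> norm (velG g (p i t) - velG g (p j t))
        \<and> norm (velG g (p i t) - velG g (p j t)) \<le> MG' * norm (p i t - p j t)"
  proof (intro allI impI ballI conjI)
    fix t :: real and i j :: nat assume t: "t > 0" and i: "i \<in> {1..N}" and j: "j \<in> {1..N}"
    have bi: "norm (p i t) \<le> R" using bnd[of i t] i t unfolding I_def by blast
    have bj: "norm (p j t) \<le> R" using bnd[of j t] j t unfolding I_def by blast
    show "mG' * norm (p i t - p j t) \<le> norm (velG g (p i t) - velG g (p j t))"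
      by (rule lowerG[OF bi bj])
    show "norm (velG g (p i t) - velG g (p j t)) \<le> MG' * norm (p i t - p j t)"
      using GB[OF bi bj] by (rule conjunct2)
  qed
  have part4: "\<exists>\<M>>0. \<forall>t>0. \<forall>i\<in>{1..N}. \<forall>j\<in>{1..N}.
          \<M> * (norm (p i t - p j t))\<^sup>2 \<le> (p i t - p j t) \<bullet> (velG g (p i t) - velG g (p j t))"
  proof (intro exI[of _ mG'] conjI mG'pos allI impI ballI)
    fix t :: real and i j :: nat assume t: "t > 0" and i: "i \<in> {1..N}" and j: "j \<in> {1..N}"
    have bi: "norm (p i t) \<le> R" using bnd[of i t] i t unfolding I_def by blast
    have bj: "norm (p j t) \<le> R" using bnd[of j t] j t unfolding I_def by blast
    show "mG' * (norm (p i t - p j t))\<^sup>2 \<le> (p i t - p j t) \<bullet> (velG g (p i t) - velG g (p j t))"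
      using GB[OF bi bj] by (rule conjunct1)
  qed
  have part1': "\<forall>t>0. ((\<lambda>s. \<Sum>k\<in>{1..N}. p k s) has_vector_derivative 0) (at t)"
    using part1 by blast
  show ?thesis
    by (rule conjI[OF part1' conjI[OF part2' conjI[OF part_sup conjI[OF part3 part4]]]])
qed

end
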